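(* Let $S=[0,1]^3$ be the unit cube. Among all admissible orientations of $S$, the drainage time $T(R)$ attains its minimum when one of the cube's space diagonals is vertical, and $$T_{\min}=\frac{8\sqrt[4]{3}}{5K}\left(1+3\sqrt{3}-4\sqrt{2}\right).$$
   Context: For a rotation $R$ of $\mathbb{R}^3$, let $S_R$ be the translate of $R(S)$ lying in $\{z\ge0\}$ and touching the plane $z=0$ (the orifice is at the lowest point of the container). The drainage time is $T(R)=\frac1K\iiint_{S_R} z^{-1/2}\,dV=\frac1K\int_0^H A(h)h^{-1/2}\,dh$, where $K>0$ is a fixed constant, $A(h)$ is the area of the horizontal cross-section at height $h$ and $H$ is the height of $S_R$ (this is the total drainage time under Torricelli's law $A(h)h'=-ka\sqrt{2gh}$, $K=ka\sqrt{2g}$). $T_{\min}$ denotes the minimum of $T(R)$ over all rotations $R$. *)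

theory Defs
  imports "HOL-Analysis.Analysis"
begin

text \<open>Points of R^3 are of type real^3; the vertical (z) coordinate is component 3.
  Rotations are rotation matrices Q (orthogonal, det = 1) acting by Q *v x.\<close>

definition zc :: "real^3 \<Rightarrow> real" where
  "zc x = x $ 3"

definition unit_cube :: "(real^3) set" where
  "unit_cube = cbox 0 1"

text \<open>Height of the lowest point of the rotated cube.\<close>
definition low :: "real^3^3 \<Rightarrow> real" where
  "low Q = (INF x\<in>unit_cube. zc (Q *v x))"

text \<open>S_R: translate of R(S) lying in z >= 0 and touching z = 0.\<close>
definition placed :: "real^3^3 \<Rightarrow> (real^3) set" where
  "placed Q = (\<lambda>x. Q *v x - low Q *\<^sub>R axis 3 1) ` unit_cube"

text \<open>Drainage time T(R) = (1/K) * triple integral over S_R of z^(-1/2).\<close>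
definition drain_time :: "real \<Rightarrow> real^3^3 \<Rightarrow> real" where
  "drain_time K Q = (1 / K) * integral (placed Q) (\<lambda>p. (zc p) powr (-1/2))"

definition T_min :: "real \<Rightarrow> real" where
  "T_min K = (INF Q\<in>{Q. rotation_matrix Q}. drain_time K Q)"

text \<open>Some space diagonal of the cube (direction with all entries +-1) is mapped to a vertical vector.\<close>
definition diagonal_vertical :: "real^3^3 \<Rightarrow> bool" where
  "diagonal_vertical Q \<longleftrightarrow>
     (\<exists>d::real^3. (\<forall>i. d $ i = 1 \<or> d $ i = -1) \<and> (\<exists>c. Q *v d = c *\<^sub>R axis 3 1))"

end

theory Submission
  imports Defs
begin


lemma cov_affine:
  fixes h :: "real^3 \<Rightarrow> real" and A :: "real^3^3"
  assumes A: "\<bar>det A\<bar> = 1" and S: "S \<in> sets lebesgue"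
  shows "(\<lambda>x. h (A *v x + t)) absolutely_integrable_on S \<and> ((\<lambda>x. h (A *v x + t)) has_integral b) S
     \<longleftrightarrow> h absolutely_integrable_on ((\<lambda>x. A *v x + t) ` S) \<and> (h has_integral b) ((\<lambda>x. A *v x + t) ` S)"
proof -
  let ?g = "\<lambda>x. A *v x + t"
  have der: "\<And>x. x \<in> S \<Longrightarrow> (?g has_derivative (\<lambda>y. A *v y)) (at x within S)"
    by (intro has_derivative_add_const bounded_linear_imp_has_derivative matrix_vector_mul_bounded_linear)
  have inj: "inj_on ?g S"
  proof -
    have "invertible A" using A by (auto simp: invertible_det_nz)
    then show ?thesis
      by (metis (no_types, lifting) add_right_cancel inj_on_def injD invertible_left_inverse matrix_left_invertible_injective)
  qed
  have mat: "matrix (\<lambda>y. A *v y) = A" by simp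
  have "((\<lambda>x. \<bar>det (matrix (\<lambda>y. A *v y))\<bar> *\<^sub>R (vec (h (?g x)) :: real^1)) absolutely_integrable_on S \<and>
           integral S (\<lambda>x. \<bar>det (matrix (\<lambda>y. A *v y))\<bar> *\<^sub>R (vec (h (?g x)) :: real^1)) = vec b)
     \<longleftrightarrow> (\<lambda>x. vec (h x) :: real^1) absolutely_integrable_on (?g ` S) \<and> integral (?g ` S) (\<lambda>x. vec (h x) :: real^1) = vec b"
    by (rule has_absolute_integral_change_of_variables[OF S der inj])
  then have "((\<lambda>x. (vec (h (?g x)) :: real^1)) absolutely_integrable_on S \<and>
           ((\<lambda>x. (vec (h (?g x)) :: real^1)) has_integral vec b) S)
     \<longleftrightarrow> (\<lambda>x. vec (h x) :: real^1) absolutely_integrable_on (?g ` S) \<and> ((\<lambda>x. vec (h x) :: real^1) has_integral vec b) (?g ` S)"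
    using A by (auto simp: mat has_integral_iff absolutely_integrable_on_def)
  then show ?thesis
    unfolding has_integral_componentwise_iff [where y="vec b"]
           absolutely_integrable_componentwise_iff [where f="\<lambda>x. vec (h x) :: real^1"]
           absolutely_integrable_componentwise_iff [where f="\<lambda>x. vec (h (?g x)) :: real^1"]
    by (simp add: Basis_vec_def cart_eq_inner_axis[symmetric])
qed



definition iso3 :: "real \<times> real \<times> real \<Rightarrow> real^3" where
  "iso3 p = vector [fst p, fst (snd p), snd (snd p)]"

lemma iso3_nth [simp]: "iso3 p $ 1 = fst p" "iso3 p $ 2 = fst (snd p)" "iso3 p $ 3 = snd (snd p)"
  by (simp_all add: iso3_def)

lemma iso3_eq: "iso3 p = (\<chi> i. if i = 1 then fst p else if i = 2 then fst (snd p) else snd (snd p))"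
  by (simp add: vec_eq_iff forall_3)

lemma iso3_cont: "continuous_on UNIV iso3"
  unfolding iso3_eq
  apply (intro continuous_on_vec_lambda)
  subgoal for i by (cases "i = 1"; cases "i = 2"; auto intro!: continuous_intros)
  done

lemma iso3_meas [measurable]: "iso3 \<in> borel_measurable borel"
  using iso3_cont by (rule borel_measurable_continuous_onI)

lemma prod_Basis3: "(\<Prod>b\<in>(Basis :: (real^3) set). f b) = f (axis 1 1) * f (axis 2 1) * f (axis 3 1)"
proof -
  have B3: "(Basis :: (real^3) set) = {axis 1 1, axis 2 1, axis 3 1}"
    by (auto simp: Basis_vec_def UNIV_3)
  show ?thesis unfolding B3 by (simp add: axis_eq_axis mult.assoc)
qed

lemma distr_iso3: "distr lborel borel iso3 = (lborel :: (real^3) measure)"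
proof (rule lborel_eqI[symmetric])
  fix l u :: "real^3"
  assume lu: "\<And>b. b \<in> Basis \<Longrightarrow> l \<bullet> b \<le> u \<bullet> b"
  have le: "l $ i \<le> u $ i" for i using lu[of "axis i 1"] by (auto simp: Basis_vec_def cart_eq_inner_axis)
  have pre: "iso3 -` box l u = {l$1<..<u$1} \<times> ({l$2<..<u$2} \<times> {l$3<..<u$3})"
    by (auto simp: box_def Basis_vec_def cart_eq_inner_axis[symmetric] forall_3)
  have "emeasure (distr lborel borel iso3) (box l u) = emeasure (lborel :: (real \<times> real \<times> real) measure) (iso3 -` box l u)"
    by (simp add: emeasure_distr)
  also have "\<dots> = emeasure (lborel \<Otimes>\<^sub>M lborel) ({l$1<..<u$1} \<times> ({l$2<..<u$2} \<times> {l$3<..<u$3}))"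
    unfolding pre lborel_prod ..
  also have "\<dots> = emeasure lborel {l$1<..<u$1} * emeasure lborel ({l$2<..<u$2} \<times> {l$3<..<u$3})"
    by (rule lborel.emeasure_pair_measure_Times) (auto intro!: borel_open open_Times)
  also have "emeasure lborel ({l$2<..<u$2} \<times> {l$3<..<u$3}) = emeasure (lborel \<Otimes>\<^sub>M lborel) ({l$2<..<u$2} \<times> {l$3<..<u$3})"
    unfolding lborel_prod ..
  also have "\<dots> = emeasure lborel {l$2<..<u$2} * emeasure lborel {l$3<..<u$3}"
    by (rule lborel.emeasure_pair_measure_Times) auto
  also have "emeasure lborel {l$1<..<u$1} * (emeasure lborel {l$2<..<u$2} * emeasure lborel {l$3<..<u$3}) = ennreal ((u$1 - l$1) * (u$2 - l$2) * (u$3 - l$3))"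
    using le by (simp add: ennreal_mult' mult.assoc)
  also have "\<dots> = ennreal (\<Prod>b\<in>Basis. (u - l) \<bullet> b)"
    by (simp add: prod_Basis3 cart_eq_inner_axis[symmetric])
  finally show "emeasure (distr lborel borel iso3) (box l u) = ennreal (\<Prod>b\<in>Basis. (u - l) \<bullet> b)" .
qed simp

definition I3 :: "(real \<Rightarrow> real \<Rightarrow> real \<Rightarrow> real) \<Rightarrow> ennreal" where
  "I3 f = (\<integral>\<^sup>+a. \<integral>\<^sup>+b. \<integral>\<^sup>+c. ennreal (f a b c * indicator {0<..<1} a * indicator {0<..<1} b * indicator {0<..<1} c) \<partial>lborel \<partial>lborel \<partial>lborel)"

lemma vec_box: "(vector [a, b, c] :: real^3) \<in> box 0 1 \<longleftrightarrow> a \<in> {0<..<1} \<and> b \<in> {0<..<1} \<and> c \<in> {0<..<1}"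
  by (auto simp: box_def Basis_vec_def cart_eq_inner_axis[symmetric] forall_3)

lemma nn_lborel3:
  fixes g :: "real^3 \<Rightarrow> ennreal"
  assumes [measurable]: "g \<in> borel_measurable borel"
  shows "(\<integral>\<^sup>+x. g x \<partial>lborel) = (\<integral>\<^sup>+a. \<integral>\<^sup>+b. \<integral>\<^sup>+c. g (iso3 (a, b, c)) \<partial>lborel \<partial>lborel \<partial>lborel)"
proof -
  have "(\<integral>\<^sup>+x. g x \<partial>lborel) = (\<integral>\<^sup>+x. g x \<partial>(distr lborel borel iso3))"
    by (simp add: distr_iso3)
  also have "\<dots> = (\<integral>\<^sup>+p. g (iso3 p) \<partial>lborel)"
    by (rule nn_integral_distr) auto
  also have "\<dots> = (\<integral>\<^sup>+p. g (iso3 p) \<partial>(lborel \<Otimes>\<^sub>M lborel))"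
    by (simp add: lborel_prod)
  also have "\<dots> = (\<integral>\<^sup>+a. \<integral>\<^sup>+q. g (iso3 (a, q)) \<partial>lborel \<partial>lborel)"
    by (rule lborel.nn_integral_fst[symmetric]) (simp add: lborel_prod)
  also have "\<dots> = (\<integral>\<^sup>+a. \<integral>\<^sup>+q. g (iso3 (a, q)) \<partial>(lborel \<Otimes>\<^sub>M lborel) \<partial>lborel)"
    by (simp add: lborel_prod)
  also have "\<dots> = (\<integral>\<^sup>+a. \<integral>\<^sup>+b. \<integral>\<^sup>+c. g (iso3 (a, b, c)) \<partial>lborel \<partial>lborel \<partial>lborel)"
    by (intro nn_integral_cong lborel.nn_integral_fst[symmetric]) (simp add: lborel_prod)
  finally show ?thesis .
qed

lemma transfer3:
  fixes f :: "real^3 \<Rightarrow> real"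
  assumes [measurable]: "f \<in> borel_measurable borel" and nn: "\<And>x. 0 \<le> f x"
    and I: "I3 (\<lambda>a b c. f (vector [a, b, c])) = ennreal r" and r: "0 \<le> r"
  shows "(f has_integral r) (cbox 0 1)"
proof -
  let ?g = "\<lambda>x. f x * indicator (box 0 1) x"
  have "(\<integral>\<^sup>+x. ennreal (?g x) \<partial>lborel) = (\<integral>\<^sup>+a. \<integral>\<^sup>+b. \<integral>\<^sup>+c. ennreal (?g (iso3 (a, b, c))) \<partial>lborel \<partial>lborel \<partial>lborel)"
    by (rule nn_lborel3) measurable
  also have "\<dots> = I3 (\<lambda>a b c. f (vector [a, b, c]))"
    unfolding I3_def
    by (intro nn_integral_cong) (auto simp: iso3_def indicator_def vec_box)
  finally have "(\<integral>\<^sup>+x. ennreal (?g x) \<partial>lborel) = ennreal r" using I by simp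
  then have "(?g has_integral r) UNIV"
    by (intro nn_integral_has_integral) (auto simp: nn r)
  then have "(f has_integral r) (box 0 1)"
  proof -
    have eq: "?g = (\<lambda>x. if x \<in> box 0 1 then f x else 0)" by (auto simp: indicator_def)
    show ?thesis using \<open>(?g has_integral r) UNIV\<close> unfolding eq has_integral_restrict_UNIV .
  qed
  then show ?thesis by (rule has_integral_open_interval[THEN iffD1])
qed



lemma ftc_nn:
  fixes F f :: "real \<Rightarrow> real"
  assumes ab: "a < b" and cont: "continuous_on {a..b} F"
    and der: "\<And>x. x \<in> {a<..<b} \<Longrightarrow> (F has_real_derivative f x) (at x)"
    and nn: "\<And>x. x \<in> {a<..<b} \<Longrightarrow> 0 \<le> f x"
  shows "(\<integral>\<^sup>+x. ennreal (f x * indicator {a<..<b} x) \<partial>lborel) = ennreal (F b - F a)"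
    and "0 \<le> F b - F a"
proof -
  have "(f has_integral (F b - F a)) {a..b}"
    using ab cont der by (intro fundamental_theorem_of_calculus_interior) (auto simp: has_real_derivative_iff_has_vector_derivative[symmetric])
  then have I: "(f has_integral (F b - F a)) {a<..<b}"
    using has_integral_open_interval[of f "F b - F a" a b] by simp
  have "(\<integral>\<^sup>+x. ennreal (f x) * indicator {a<..<b} x \<partial>lborel) = ennreal (F b - F a)"
    by (rule nn_integral_has_integral_lebesgue'[OF nn I])
  moreover have "(\<integral>\<^sup>+x. ennreal (f x * indicator {a<..<b} x) \<partial>lborel) = (\<integral>\<^sup>+x. ennreal (f x) * indicator {a<..<b} x \<partial>lborel)"
    by (intro nn_integral_cong) (auto simp: indicator_def)
  ultimately show "(\<integral>\<^sup>+x. ennreal (f x * indicator {a<..<b} x) \<partial>lborel) = ennreal (F b - F a)" by simp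
  show "0 \<le> F b - F a"
    using I nn by (rule has_integral_nonneg)
qed

lemma I3_layers:
  assumes h1: "\<And>a b. a \<in> {0<..<1} \<Longrightarrow> b \<in> {0<..<1} \<Longrightarrow>
      (\<integral>\<^sup>+c. ennreal (f a b c * indicator {0<..<1} c) \<partial>lborel) = ennreal (g a b)"
    and h2: "\<And>a. a \<in> {0<..<1} \<Longrightarrow> (\<integral>\<^sup>+b. ennreal (g a b * indicator {0<..<1} b) \<partial>lborel) = ennreal (k a)"
    and h3: "(\<integral>\<^sup>+a. ennreal (k a * indicator {0<..<1} a) \<partial>lborel) = ennreal r"
  shows "I3 f = ennreal r"
proof -
  have s1: "(\<integral>\<^sup>+c. ennreal (f a b c * indicator {0<..<1} a * indicator {0<..<1} b * indicator {0<..<1} c) \<partial>lborel)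
      = ennreal (g a b * indicator {0<..<1} a * indicator {0<..<1} b)" for a b
  proof (cases "a \<in> {0<..<1} \<and> b \<in> {0<..<1}")
    case True then show ?thesis using h1[of a b] by simp
  next
    case False then show ?thesis by (auto simp: indicator_def)
  qed
  have s2: "(\<integral>\<^sup>+b. ennreal (g a b * indicator {0<..<1} a * indicator {0<..<1} b) \<partial>lborel)
      = ennreal (k a * indicator {0<..<1} a)" for a
  proof (cases "a \<in> {0<..<1}")
    case True then show ?thesis using h2[of a] by simp
  next
    case False then show ?thesis by (auto simp: indicator_def)
  qed
  show ?thesis unfolding I3_def s1 s2 h3 ..
qed

lemma I3_mono:
  assumes "\<And>a b c. a \<in> {0<..<1} \<Longrightarrow> b \<in> {0<..<1} \<Longrightarrow> c \<in> {0<..<1} \<Longrightarrow> f a b c \<le> g a b c"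
  shows "I3 f \<le> I3 g"
  unfolding I3_def
  by (intro nn_integral_mono) (auto simp: indicator_def assms ennreal_leI)

lemma powr_mhalf: "0 \<le> x \<Longrightarrow> x powr (-1/2) = 1 / sqrt x"
  by (cases "x = 0") (simp_all add: powr_minus_divide powr_half_sqrt)

lemma meas_test: "(\<lambda>y::real^3. (v \<bullet> y) powr (-1/2)) \<in> borel_measurable borel"
  by measurable



lemma d_sqrt: "0 < p + x \<Longrightarrow> ((\<lambda>x. sqrt (p + x)) has_real_derivative 1 / (2 * sqrt (p + x))) (at x)"
  by (auto intro!: derivative_eq_intros simp: field_simps)

lemma d_32: "0 < p + x \<Longrightarrow> ((\<lambda>x. (p + x) * sqrt (p + x)) has_real_derivative (3/2) * sqrt (p + x)) (at x)"
  by (auto intro!: derivative_eq_intros simp: field_simps)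

lemma d_52: "0 < p + x \<Longrightarrow> ((\<lambda>x. (p + x)^2 * sqrt (p + x)) has_real_derivative (5/2) * ((p + x) * sqrt (p + x))) (at x)"
  by (auto intro!: derivative_eq_intros simp: field_simps power2_eq_square)



lemma L1:
  assumes "0 < p"
  shows "(\<integral>\<^sup>+c. ennreal ((p + c) powr (-1/2) * indicator {0<..<1} c) \<partial>lborel) = ennreal (2 * sqrt (p + 1) - 2 * sqrt p)"
proof -
  have "(\<integral>\<^sup>+c. ennreal ((p + c) powr (-1/2) * indicator {0<..<1} c) \<partial>lborel) = ennreal ((\<lambda>c. 2 * sqrt (p + c)) 1 - (\<lambda>c. 2 * sqrt (p + c)) 0)"
  proof (rule ftc_nn(1))
    show "continuous_on {0..1} (\<lambda>c. 2 * sqrt (p + c))" by (intro continuous_intros)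
    fix x :: real assume x: "x \<in> {0<..<1}"
    then have "0 < p + x" using assms by auto
    then have "((\<lambda>c. 2 * sqrt (p + c)) has_real_derivative 2 * (1 / (2 * sqrt (p + x)))) (at x)"
      by (intro DERIV_cmult d_sqrt)
    then show "((\<lambda>c. 2 * sqrt (p + c)) has_real_derivative (p + x) powr (-1/2)) (at x)"
      using \<open>0 < p + x\<close> powr_mhalf[of "p + x"] by simp
    show "0 \<le> (p + x) powr (-1/2)" by simp
  qed simp
  then show ?thesis by simp
qed

lemma L2:
  assumes "0 < a"
  shows "(\<integral>\<^sup>+b. ennreal ((2 * sqrt (a + b + 1) - 2 * sqrt (a + b)) * indicator {0<..<1} b) \<partial>lborel)
       = ennreal ((4/3) * ((2 + a) * sqrt (2 + a) - 2 * ((1 + a) * sqrt (1 + a)) + a * sqrt a))"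
    and "0 \<le> (4/3) * ((2 + a) * sqrt (2 + a) - 2 * ((1 + a) * sqrt (1 + a)) + a * sqrt a)"
proof -
  let ?F = "\<lambda>b. (4/3) * (((a + 1) + b) * sqrt ((a + 1) + b) - (a + b) * sqrt (a + b))"
  have eq: "?F 1 - ?F 0 = (4/3) * ((2 + a) * sqrt (2 + a) - 2 * ((1 + a) * sqrt (1 + a)) + a * sqrt a)"
    by (simp add: algebra_simps)
  have cont: "continuous_on {0..1} ?F" by (intro continuous_intros)
  have der: "(?F has_real_derivative (2 * sqrt (a + b + 1) - 2 * sqrt (a + b))) (at b)" if "b \<in> {0<..<1}" for b
  proof -
    have p1: "0 < (a + 1) + b" "0 < a + b" using that assms by auto
    have "(?F has_real_derivative (4/3) * ((3/2) * sqrt ((a + 1) + b) - (3/2) * sqrt (a + b))) (at b)"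
      by (intro DERIV_cmult DERIV_diff d_32 p1)
    then show ?thesis by (simp add: algebra_simps)
  qed
  have nn: "0 \<le> 2 * sqrt (a + b + 1) - 2 * sqrt (a + b)" if "b \<in> {0<..<1}" for b
    using that assms by auto
  show "(\<integral>\<^sup>+b. ennreal ((2 * sqrt (a + b + 1) - 2 * sqrt (a + b)) * indicator {0<..<1} b) \<partial>lborel)
       = ennreal ((4/3) * ((2 + a) * sqrt (2 + a) - 2 * ((1 + a) * sqrt (1 + a)) + a * sqrt a))"
    using ftc_nn(1)[of 0 1 ?F, OF _ cont der nn] unfolding eq by simp
  show "0 \<le> (4/3) * ((2 + a) * sqrt (2 + a) - 2 * ((1 + a) * sqrt (1 + a)) + a * sqrt a)"
    using ftc_nn(2)[of 0 1 ?F, OF _ cont der nn] unfolding eq by simp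
qed

lemma L3:
  "(\<integral>\<^sup>+a. ennreal ((4/3) * ((2 + a) * sqrt (2 + a) - 2 * ((1 + a) * sqrt (1 + a)) + a * sqrt a) * indicator {0<..<1} a) \<partial>lborel)
     = ennreal ((8/5) * (1 + 3 * sqrt 3 - 4 * sqrt 2))"
    and "0 \<le> (8/5) * (1 + 3 * sqrt 3 - 4 * sqrt 2)"
proof -
  let ?F = "\<lambda>a. (8/15) * ((2 + a)^2 * sqrt (2 + a) - 2 * ((1 + a)^2 * sqrt (1 + a)) + (0 + a)^2 * sqrt (0 + a))"
  have s9: "sqrt 9 = 3" by (simp add: real_sqrt_eq_iff)
  have s4: "sqrt 4 = 2" by (simp add: real_sqrt_eq_iff)
  have eq: "?F 1 - ?F 0 = (8/5) * (1 + 3 * sqrt 3 - 4 * sqrt 2)"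
    by (simp add: algebra_simps power2_eq_square)
  have cont: "continuous_on {0..1} ?F" by (intro continuous_intros)
  have der: "(?F has_real_derivative (4/3) * ((2 + a) * sqrt (2 + a) - 2 * ((1 + a) * sqrt (1 + a)) + a * sqrt a)) (at a)" if "a \<in> {0<..<1}" for a
  proof -
    have p1: "0 < 2 + a" "0 < 1 + a" "0 < 0 + a" using that by auto
    have "(?F has_real_derivative (8/15) * ((5/2) * ((2 + a) * sqrt (2 + a)) - 2 * ((5/2) * ((1 + a) * sqrt (1 + a))) + (5/2) * ((0 + a) * sqrt (0 + a)))) (at a)"
      by (intro DERIV_cmult DERIV_diff DERIV_add d_52 p1)
    then show ?thesis by (simp add: algebra_simps)
  qed
  have nn: "0 \<le> (4/3) * ((2 + a) * sqrt (2 + a) - 2 * ((1 + a) * sqrt (1 + a)) + a * sqrt a)" if "a \<in> {0<..<1}" for a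
    using L2(2)[of a] that by auto
  show "(\<integral>\<^sup>+a. ennreal ((4/3) * ((2 + a) * sqrt (2 + a) - 2 * ((1 + a) * sqrt (1 + a)) + a * sqrt a) * indicator {0<..<1} a) \<partial>lborel)
     = ennreal ((8/5) * (1 + 3 * sqrt 3 - 4 * sqrt 2))"
    using ftc_nn(1)[of 0 1 ?F, OF _ cont der nn] unfolding eq by simp
  show "0 \<le> (8/5) * (1 + 3 * sqrt 3 - 4 * sqrt 2)"
    using ftc_nn(2)[of 0 1 ?F, OF _ cont der nn] unfolding eq by simp
qed

lemma L3nn: "0 \<le> (8/5) * (1 + 3 * sqrt 3 - 4 * sqrt 2)"
proof -
  have "sqrt 2 \<le> sqrt ((142/100)^2)" by (rule real_sqrt_le_mono) (simp add: power2_eq_square)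
  then have a: "sqrt 2 \<le> 142/100" by simp
  have "sqrt ((173/100)^2) \<le> sqrt 3" by (rule real_sqrt_le_mono) (simp add: power2_eq_square)
  then have b: "173/100 \<le> sqrt 3" by simp
  show ?thesis using a b by simp
qed

lemma J_has:
  "((\<lambda>y::real^3. (y$1 + y$2 + y$3) powr (-1/2)) has_integral (8/5) * (1 + 3 * sqrt 3 - 4 * sqrt 2)) (cbox 0 1)"
proof (rule transfer3)
  show "I3 (\<lambda>a b c. ((vector [a, b, c] :: real^3) $ 1 + (vector [a, b, c] :: real^3) $ 2 + (vector [a, b, c] :: real^3) $ 3) powr (-1/2))
      = ennreal ((8/5) * (1 + 3 * sqrt 3 - 4 * sqrt 2))"
  proof (simp only: vector_3, rule I3_layers)
    fix a b :: real assume "a \<in> {0<..<1}" "b \<in> {0<..<1}"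
    then show "(\<integral>\<^sup>+c. ennreal ((a + b + c) powr (-1/2) * indicator {0<..<1} c) \<partial>lborel) = ennreal (2 * sqrt (a + b + 1) - 2 * sqrt (a + b))"
      using L1[of "a + b"] by simp
  next
    fix a :: real assume "a \<in> {0<..<1}"
    then show "(\<integral>\<^sup>+b. ennreal ((2 * sqrt (a + b + 1) - 2 * sqrt (a + b)) * indicator {0<..<1} b) \<partial>lborel)
       = ennreal ((4/3) * ((2 + a) * sqrt (2 + a) - 2 * ((1 + a) * sqrt (1 + a)) + a * sqrt a))"
      using L2(1)[of a] by simp
  next
    show "(\<integral>\<^sup>+a. ennreal ((4/3) * ((2 + a) * sqrt (2 + a) - 2 * ((1 + a) * sqrt (1 + a)) + a * sqrt a) * indicator {0<..<1} a) \<partial>lborel)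
     = ennreal ((8/5) * (1 + 3 * sqrt 3 - 4 * sqrt 2))" by (rule L3(1))
  qed
qed (use L3nn in auto)



lemma int_mhalf:
  assumes "0 \<le> K"
  shows "(\<integral>\<^sup>+c. ennreal (K * c powr (-1/2) * indicator {0<..<1} c) \<partial>lborel) = ennreal (2 * K)"
proof -
  have "(\<integral>\<^sup>+c. ennreal (K * c powr (-1/2) * indicator {0<..<1} c) \<partial>lborel) = ennreal ((\<lambda>c. K * (2 * sqrt (0 + c))) 1 - (\<lambda>c. K * (2 * sqrt (0 + c))) 0)"
  proof (rule ftc_nn(1))
    show "continuous_on {0..1} (\<lambda>c. K * (2 * sqrt (0 + c)))" by (intro continuous_intros)
    fix x :: real assume x: "x \<in> {0<..<1}"
    then have "0 < 0 + x" by auto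
    then have "((\<lambda>c. K * (2 * sqrt (0 + c))) has_real_derivative K * (2 * (1 / (2 * sqrt (0 + x))))) (at x)"
      by (intro DERIV_cmult d_sqrt)
    then show "((\<lambda>c. K * (2 * sqrt (0 + c))) has_real_derivative K * x powr (-1/2)) (at x)"
      using \<open>0 < 0 + x\<close> powr_mhalf[of "x"] by simp
    show "0 \<le> K * x powr (-1/2)" using assms by simp
  qed simp
  then show ?thesis by (simp add: mult.commute)
qed

lemma inner3: "v \<bullet> (vector [a, b, c] :: real^3) = v$1 * a + v$2 * b + v$3 * c"
  by (simp add: inner_vec_def sum_3)

lemma intv:
  fixes v :: "real^3"
  assumes nn: "\<And>i. 0 \<le> v$i" and pos: "0 < v$1 + v$2 + v$3"
  shows "(\<lambda>y. (v \<bullet> y) powr (-1/2)) integrable_on cbox 0 1"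
proof -
  define M where "M = (v$1 + v$2 + v$3) powr (-1/2)"
  have M0: "0 \<le> M" by (simp add: M_def)
  let ?f = "\<lambda>a b c. (v \<bullet> (vector [a, b, c] :: real^3)) powr (-1/2)"
  let ?g = "\<lambda>a b c. M * a powr (-1/2) * b powr (-1/2) * c powr (-1/2)"
  have le: "?f a b c \<le> ?g a b c" if "a \<in> {0<..<1}" "b \<in> {0<..<1}" "c \<in> {0<..<1}" for a b c
  proof -
    have p: "0 < a * b * c" using that by auto
    have "a * b * c \<le> a" "a * b * c \<le> b" "a * b * c \<le> c"
      using that by (auto simp: mult_le_cancel_left1 mult_le_cancel_right1 mult_le_one mult.assoc intro: mult_le_one)
    then have "(v$1 + v$2 + v$3) * (a * b * c) \<le> v$1 * a + v$2 * b + v$3 * c"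
      using nn[of 1] nn[of 2] nn[of 3] by (simp add: distrib_right mult_left_mono add_mono)
    then have "(v$1 * a + v$2 * b + v$3 * c) powr (-1/2) \<le> ((v$1 + v$2 + v$3) * (a * b * c)) powr (-1/2)"
      using p pos by (intro powr_mono2') auto
    also have "\<dots> = ?g a b c"
      using p pos that by (simp add: M_def powr_mult)
    finally show ?thesis by (simp add: inner3)
  qed
  have Ig: "I3 ?g = ennreal (8 * M)"
  proof (rule I3_layers)
    fix a b :: real assume "a \<in> {0<..<1}" "b \<in> {0<..<1}"
    show "(\<integral>\<^sup>+c. ennreal (?g a b c * indicator {0<..<1} c) \<partial>lborel) = ennreal ((2 * M * a powr (-1/2)) * b powr (-1/2))"
      using int_mhalf[of "M * a powr (-1/2) * b powr (-1/2)"] M0 by (simp add: mult_ac)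
  next
    fix a :: real assume "a \<in> {0<..<1}"
    show "(\<integral>\<^sup>+b. ennreal ((2 * M * a powr (-1/2)) * b powr (-1/2) * indicator {0<..<1} b) \<partial>lborel) = ennreal ((4 * M) * a powr (-1/2))"
      using int_mhalf[of "2 * M * a powr (-1/2)"] M0 by (simp add: mult_ac)
  next
    show "(\<integral>\<^sup>+a. ennreal ((4 * M) * a powr (-1/2) * indicator {0<..<1} a) \<partial>lborel) = ennreal (8 * M)"
      using int_mhalf[of "4 * M"] M0 by (simp add: mult_ac)
  qed
  have "I3 ?f \<le> I3 ?g" by (rule I3_mono) (rule le)
  then have fin: "I3 ?f \<noteq> \<infinity>" using Ig by (auto simp: top_unique)
  have "((\<lambda>y. (v \<bullet> y) powr (-1/2)) has_integral enn2real (I3 ?f)) (cbox 0 1)"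
  proof (rule transfer3)
    show "I3 ?f = ennreal (enn2real (I3 ?f))" using fin by (simp add: less_top[symmetric])
  qed auto
  then show ?thesis by blast
qed



definition Fv :: "real^3 \<Rightarrow> real" where
  "Fv v = integral (cbox 0 1) (\<lambda>y. (v \<bullet> y) powr (-1/2))"

definition cyc :: "real^3 \<Rightarrow> real^3" where
  "cyc v = vector [v$3, v$1, v$2]"

definition Pm :: "real^3^3" where
  "Pm = vector [vector [0,1,0], vector [0,0,1], vector [1,0,0]]"

lemma inner_vec3: "v \<bullet> (y::real^3) = v$1 * y$1 + v$2 * y$2 + v$3 * y$3"
  by (simp add: inner_vec_def sum_3)

lemma Pm_mult: "Pm *v y = vector [y$2, y$3, y$1]"
  by (simp add: vec_eq_iff forall_3 Pm_def matrix_vector_mult_def sum_3)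

lemma det_Pm: "det Pm = 1"
  by (simp add: det_3 Pm_def)

lemma Pm_image: "(\<lambda>x. Pm *v x + 0) ` cbox 0 1 = cbox (0::real^3) 1"
proof
  show "(\<lambda>x. Pm *v x + 0) ` cbox 0 1 \<subseteq> cbox (0::real^3) 1"
    by (auto simp: Pm_mult mem_box_cart forall_3)
  show "cbox (0::real^3) 1 \<subseteq> (\<lambda>x. Pm *v x + 0) ` cbox 0 1"
  proof
    fix x :: "real^3" assume x: "x \<in> cbox 0 1"
    have "x = Pm *v (vector [x$3, x$1, x$2]) + 0"
      by (simp add: Pm_mult vec_eq_iff forall_3)
    moreover have "(vector [x$3, x$1, x$2] :: real^3) \<in> cbox 0 1"
      using x by (auto simp: mem_box_cart forall_3)
    ultimately show "x \<in> (\<lambda>x. Pm *v x + 0) ` cbox 0 1" by blast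
  qed
qed

lemma cyc_nn: "(\<And>i. 0 \<le> v$i) \<Longrightarrow> 0 \<le> cyc v $ i"
  using exhaust_3[of i] by (auto simp: cyc_def)

lemma cyc_sum: "cyc v $ 1 + cyc v $ 2 + cyc v $ 3 = v$1 + v$2 + v$3"
  by (simp add: cyc_def)

lemma Fv_has:
  assumes nn: "\<And>i. 0 \<le> v$i" and pos: "0 < v$1 + v$2 + v$3"
  shows "((\<lambda>y. (v \<bullet> y) powr (-1/2)) has_integral Fv v) (cbox 0 1)"
  using intv[OF nn pos] unfolding Fv_def by (rule integrable_integral)

lemma Fv_cyc:
  assumes nn: "\<And>i. 0 \<le> v$i" and pos: "0 < v$1 + v$2 + v$3"
  shows "Fv (cyc v) = Fv v"
proof -
  let ?h = "\<lambda>y. (v \<bullet> y) powr (-1/2)"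
  have ai: "?h absolutely_integrable_on cbox 0 1"
    by (rule nonnegative_absolutely_integrable_1[OF intv[OF nn pos]]) simp
  have "(\<lambda>x. ?h (Pm *v x + 0)) absolutely_integrable_on cbox 0 1 \<and> ((\<lambda>x. ?h (Pm *v x + 0)) has_integral Fv v) (cbox 0 1)"
    using cov_affine[of Pm "cbox 0 1" ?h 0 "Fv v"] det_Pm Pm_image ai Fv_has[OF nn pos] by simp
  moreover have "?h (Pm *v x + 0) = (cyc v \<bullet> x) powr (-1/2)" for x
    by (simp add: Pm_mult cyc_def inner_vec3 algebra_simps)
  ultimately have "((\<lambda>x. (cyc v \<bullet> x) powr (-1/2)) has_integral Fv v) (cbox 0 1)" by simp
  then show ?thesis unfolding Fv_def by (rule integral_unique)
qed



lemma tangent: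
  assumes t: "0 < t" and m: "0 < m"
  shows "(3 * m - t) / (2 * m * sqrt m) \<le> 1 / sqrt t"
proof -
  define x where "x = sqrt t"
  define u where "u = sqrt m"
  have x: "0 < x" and u: "0 < u" using t m by (auto simp: x_def u_def)
  have tx: "t = x^2" and mu: "m = u^2" using t m by (auto simp: x_def u_def)
  have key: "0 \<le> (x - u)^2 * (x + 2 * u)" using x u by simp
  have "(3 * u^2 - x^2) / (2 * u^2 * u) \<le> 1 / x"
  proof -
    have "(3 * u^2 - x^2) * x \<le> 2 * u^2 * u"
      using key by (simp add: algebra_simps power2_eq_square)
    then show ?thesis using x u by (simp add: divide_simps mult.commute)
  qed
  then show ?thesis using x u by (simp add: tx mu)
qed

lemma jensen3:
  assumes "0 < t1" "0 < t2" "0 < t3"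
  shows "3 / sqrt ((t1 + t2 + t3) / 3) \<le> 1 / sqrt t1 + 1 / sqrt t2 + 1 / sqrt t3"
proof -
  define m where "m = (t1 + t2 + t3) / 3"
  have m: "0 < m" using assms by (simp add: m_def)
  have "(3 * m - t1) / (2 * m * sqrt m) + (3 * m - t2) / (2 * m * sqrt m) + (3 * m - t3) / (2 * m * sqrt m)
        \<le> 1 / sqrt t1 + 1 / sqrt t2 + 1 / sqrt t3"
    using tangent[OF assms(1) m] tangent[OF assms(2) m] tangent[OF assms(3) m] by linarith
  moreover have "(3 * m - t1) / (2 * m * sqrt m) + (3 * m - t2) / (2 * m * sqrt m) + (3 * m - t3) / (2 * m * sqrt m)
        = 3 / sqrt m"
  proof -
    have "(3 * m - t1) / (2 * m * sqrt m) + (3 * m - t2) / (2 * m * sqrt m) + (3 * m - t3) / (2 * m * sqrt m)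
        = (9 * m - (t1 + t2 + t3)) / (2 * m * sqrt m)" using m by (simp add: field_simps)
    also have "9 * m - (t1 + t2 + t3) = 6 * m" unfolding m_def by simp
    also have "(6 * m) / (2 * m * sqrt m) = 3 / sqrt m" using m by (simp add: field_simps)
    finally show ?thesis .
  qed
  ultimately show ?thesis by (simp add: m_def)
qed

lemma pointwise:
  fixes a1 a2 a3 y1 y2 y3 :: real
  assumes a: "0 \<le> a1" "0 \<le> a2" "0 \<le> a3" and s: "0 < a1 + a2 + a3"
    and y: "0 < y1" "0 < y2" "0 < y3"
  shows "3 * (((a1 + a2 + a3) / 3) powr (-1/2) * (y1 + y2 + y3) powr (-1/2))
     \<le> (a1 * y1 + a2 * y2 + a3 * y3) powr (-1/2) + (a3 * y1 + a1 * y2 + a2 * y3) powr (-1/2)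
       + (a2 * y1 + a3 * y2 + a1 * y3) powr (-1/2)"
proof -
  have pos: "0 < b1 * y1 + b2 * y2 + b3 * y3" if "0 \<le> b1" "0 \<le> b2" "0 \<le> b3" "0 < b1 + b2 + b3" for b1 b2 b3
  proof -
    have "0 < b1 \<or> 0 < b2 \<or> 0 < b3" using that by linarith
    moreover have "0 \<le> b1 * y1" "0 \<le> b2 * y2" "0 \<le> b3 * y3" using that y by auto
    moreover have "0 < b1 * y1 \<or> 0 < b2 * y2 \<or> 0 < b3 * y3"
      using \<open>0 < b1 \<or> 0 < b2 \<or> 0 < b3\<close> y by auto
    ultimately show ?thesis by linarith
  qed
  define t1 where "t1 = a1 * y1 + a2 * y2 + a3 * y3"
  define t2 where "t2 = a3 * y1 + a1 * y2 + a2 * y3"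
  define t3 where "t3 = a2 * y1 + a3 * y2 + a1 * y3"
  have t: "0 < t1" "0 < t2" "0 < t3"
    unfolding t1_def t2_def t3_def using pos[of a1 a2 a3] pos[of a3 a1 a2] pos[of a2 a3 a1] a s by (auto simp: add_ac)
  have sum: "(t1 + t2 + t3) / 3 = ((a1 + a2 + a3) / 3) * (y1 + y2 + y3)"
    unfolding t1_def t2_def t3_def by (simp add: algebra_simps)
  have "((a1 + a2 + a3) / 3) powr (-1/2) * (y1 + y2 + y3) powr (-1/2) = ((t1 + t2 + t3) / 3) powr (-1/2)"
    using a y unfolding sum by (subst powr_mult) auto
  also have "\<dots> = 1 / sqrt ((t1 + t2 + t3) / 3)" using t by (intro powr_mhalf) simp
  finally have l: "3 * (((a1 + a2 + a3) / 3) powr (-1/2) * (y1 + y2 + y3) powr (-1/2)) = 3 / sqrt ((t1 + t2 + t3) / 3)"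
    by simp
  have r: "t1 powr (-1/2) + t2 powr (-1/2) + t3 powr (-1/2) = 1 / sqrt t1 + 1 / sqrt t2 + 1 / sqrt t3"
    using t powr_mhalf[of t1] powr_mhalf[of t2] powr_mhalf[of t3] by simp
  show ?thesis using jensen3[OF t] l r unfolding t1_def t2_def t3_def by simp
qed



definition Jv :: real where "Jv = (8/5) * (1 + 3 * sqrt 3 - 4 * sqrt 2)"

lemma Fv_lower:
  fixes v :: "real^3"
  assumes nn: "\<And>i. 0 \<le> v$i" and pos: "0 < v$1 + v$2 + v$3"
  shows "((v$1 + v$2 + v$3) / 3) powr (-1/2) * Jv \<le> Fv v"
proof -
  define s where "s = v$1 + v$2 + v$3"
  define v1 where "v1 = cyc v"
  define v2 where "v2 = cyc v1"
  have nn1: "\<And>i. 0 \<le> v1$i" unfolding v1_def by (rule cyc_nn[OF nn])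
  have nn2: "\<And>i. 0 \<le> v2$i" unfolding v2_def by (rule cyc_nn[OF nn1])
  have s1: "v1$1 + v1$2 + v1$3 = s" unfolding v1_def s_def by (rule cyc_sum)
  have s2: "v2$1 + v2$2 + v2$3 = s" unfolding v2_def using s1 cyc_sum by metis
  have sp: "0 < s" using pos by (simp add: s_def)
  have e1: "Fv v1 = Fv v" unfolding v1_def by (rule Fv_cyc[OF nn pos])
  have e2: "Fv v2 = Fv v1" unfolding v2_def by (rule Fv_cyc[OF nn1]) (use s1 sp in simp)
  have H0: "((\<lambda>y. (v \<bullet> y) powr (-1/2)) has_integral Fv v) (cbox 0 1)" by (rule Fv_has[OF nn pos])
  have H1: "((\<lambda>y. (v1 \<bullet> y) powr (-1/2)) has_integral Fv v) (cbox 0 1)"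
    using Fv_has[OF nn1] s1 sp e1 by simp
  have H2: "((\<lambda>y. (v2 \<bullet> y) powr (-1/2)) has_integral Fv v) (cbox 0 1)"
    using Fv_has[OF nn2] s2 sp e1 e2 by simp
  have Hs: "((\<lambda>y. (v \<bullet> y) powr (-1/2) + (v1 \<bullet> y) powr (-1/2) + (v2 \<bullet> y) powr (-1/2)) has_integral (Fv v + Fv v + Fv v)) (cbox 0 1)"
    by (intro has_integral_add H0 H1 H2)
  have HJ: "((\<lambda>y::real^3. 3 * ((s / 3) powr (-1/2) * (y$1 + y$2 + y$3) powr (-1/2))) has_integral (3 * ((s / 3) powr (-1/2) * Jv))) (cbox 0 1)"
    unfolding Jv_def by (intro has_integral_mult_right J_has)
  have le: "3 * ((s / 3) powr (-1/2) * Jv) \<le> Fv v + Fv v + Fv v"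
  proof (rule has_integral_le)
    show "((\<lambda>y::real^3. 3 * ((s / 3) powr (-1/2) * (y$1 + y$2 + y$3) powr (-1/2))) has_integral (3 * ((s / 3) powr (-1/2) * Jv))) (box 0 1)"
      using HJ has_integral_open_interval by blast
    show "((\<lambda>y. (v \<bullet> y) powr (-1/2) + (v1 \<bullet> y) powr (-1/2) + (v2 \<bullet> y) powr (-1/2)) has_integral (Fv v + Fv v + Fv v)) (box 0 1)"
      using Hs has_integral_open_interval by blast
    fix y :: "real^3" assume "y \<in> box 0 1"
    then have y: "0 < y$1" "0 < y$2" "0 < y$3" by (auto simp: mem_box_cart)
    show "3 * ((s / 3) powr (-1/2) * (y$1 + y$2 + y$3) powr (-1/2)) \<le> (v \<bullet> y) powr (-1/2) + (v1 \<bullet> y) powr (-1/2) + (v2 \<bullet> y) powr (-1/2)"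
      using pointwise[OF nn[of 1] nn[of 2] nn[of 3] pos y] unfolding s_def
      by (simp add: inner_vec3 v1_def v2_def cyc_def)
  qed
  then show ?thesis unfolding s_def by simp
qed



lemma inv_sqrt3: "1 / sqrt 3 = 3 powr (-1/2)"
  using powr_mhalf[of 3] by simp

lemma inv_sqrt3': "(3::real) powr - (1/2) = 1 / sqrt 3"
  using inv_sqrt3 by simp

lemma pow14: "((3::real) powr (-1/2)) powr (-1/2) = 3 powr (1/4)"
  by (simp add: powr_powr)

lemma Jv_nn: "0 \<le> Jv" unfolding Jv_def by (rule L3nn)

lemma Fv_bound:
  fixes v :: "real^3"
  assumes nn: "\<And>i. 0 \<le> v$i" and n1: "(v$1)^2 + (v$2)^2 + (v$3)^2 = 1"
  shows "3 powr (1/4) * Jv \<le> Fv v"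
proof -
  define s where "s = v$1 + v$2 + v$3"
  have s0: "0 \<le> s" using nn[of 1] nn[of 2] nn[of 3] by (simp add: s_def)
  have sp: "0 < s"
  proof (rule ccontr)
    assume "\<not> 0 < s"
    then have "v$1 = 0" "v$2 = 0" "v$3 = 0" using nn[of 1] nn[of 2] nn[of 3] by (auto simp: s_def)
    then show False using n1 by simp
  qed
  have "s^2 \<le> 3" 
  proof -
    have "s^2 = 3 * ((v$1)^2 + (v$2)^2 + (v$3)^2) - ((v$1 - v$2)^2 + (v$2 - v$3)^2 + (v$3 - v$1)^2)"
      by (simp add: s_def power2_eq_square algebra_simps)
    then have "s^2 = 3 - ((v$1 - v$2)^2 + (v$2 - v$3)^2 + (v$3 - v$1)^2)" using n1 by simp
    moreover have "0 \<le> (v$1 - v$2)^2 + (v$2 - v$3)^2 + (v$3 - v$1)^2" by simp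
    ultimately show ?thesis by linarith
  qed
  then have "s \<le> sqrt 3" using s0 by (metis real_le_rsqrt)
  then have "s / 3 \<le> sqrt 3 / 3" by (rule divide_right_mono) simp
  also have "sqrt 3 / 3 = 1 / sqrt 3"
  proof -
    have "sqrt 3 * sqrt 3 = 3" by simp
    then show ?thesis by (simp add: field_simps)
  qed
  finally have "s / 3 \<le> 3 powr (-1/2)" by (simp add: inv_sqrt3)
  then have "(3 powr (-1/2)) powr (-1/2) \<le> (s / 3) powr (-1/2)"
    using sp by (intro powr_mono2') auto
  then have "3 powr (1/4) \<le> (s / 3) powr (-1/2)" by (simp only: pow14)
  then have "3 powr (1/4) * Jv \<le> (s / 3) powr (-1/2) * Jv" using Jv_nn by (rule mult_right_mono)
  also have "\<dots> \<le> Fv v" using Fv_lower[OF nn] sp by (simp add: s_def)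
  finally show ?thesis .
qed

lemma Fv_diag:
  fixes v :: "real^3"
  assumes v: "\<And>i. v$i = 1 / sqrt 3"
  shows "Fv v = 3 powr (1/4) * Jv"
proof -
  have "((\<lambda>y::real^3. 3 powr (1/4) * (y$1 + y$2 + y$3) powr (-1/2)) has_integral 3 powr (1/4) * Jv) (cbox 0 1)"
    unfolding Jv_def by (intro has_integral_mult_right J_has)
  moreover have "(v \<bullet> y) powr (-1/2) = 3 powr (1/4) * (y$1 + y$2 + y$3) powr (-1/2)" if "y \<in> cbox 0 1" for y :: "real^3"
  proof -
    have y: "0 \<le> y$1 + y$2 + y$3" using that by (auto simp: mem_box_cart intro: add_nonneg_nonneg)
    have "v \<bullet> y = 3 powr (-1/2) * (y$1 + y$2 + y$3)"
      by (simp add: inner_vec3 v inv_sqrt3' algebra_simps)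
    then have "(v \<bullet> y) powr (-1/2) = (3 powr (-1/2)) powr (-1/2) * (y$1 + y$2 + y$3) powr (-1/2)"
      using y by (simp add: powr_mult)
    then show ?thesis by (simp only: pow14)
  qed
  ultimately have "((\<lambda>y. (v \<bullet> y) powr (-1/2)) has_integral 3 powr (1/4) * Jv) (cbox 0 1)"
    by (rule has_integral_spike_finite[OF finite.emptyI, rotated]) auto
  then show ?thesis unfolding Fv_def by (rule integral_unique)
qed



lemma zc_mult: "zc (Q *v x) = Q$3 \<bullet> x"
  by (simp add: zc_def matrix_vector_mult_def inner_vec_def)

lemma min_le_mult:
  assumes x0: "0 \<le> x" and x1: "x \<le> 1"
  shows "min u 0 \<le> u * (x::real)"
proof (cases "0 \<le> u")
  case True then show ?thesis using x0 by (simp add: min_def)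
next
  case False
  from x1 have "u * 1 \<le> u * x" using False by (intro mult_left_mono_neg) auto
  then show ?thesis by (simp add: min_def)
qed

definition ev :: "real^3 \<Rightarrow> real^3" where
  "ev u = (\<chi> i. if u$i < 0 then 1 else 0)"

definition sg :: "real^3 \<Rightarrow> real^3^3" where
  "sg u = (\<chi> i j. if i = j then (if u$i < 0 then -1 else 1) else 0)"

definition mlow :: "real^3 \<Rightarrow> real" where
  "mlow u = min (u$1) 0 + min (u$2) 0 + min (u$3) 0"

lemma low_eq: "low Q = mlow (Q$3)"
proof -
  let ?u = "Q$3"
  have "low Q = Inf ((\<lambda>x. ?u \<bullet> x) ` cbox 0 1)"
    unfolding low_def unit_cube_def by (simp add: zc_mult)
  also have "\<dots> = mlow ?u"
  proof (rule cInf_eq_minimum)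
    have "ev ?u \<in> cbox 0 1" by (auto simp: ev_def mem_box_cart)
    moreover have "?u \<bullet> ev ?u = mlow ?u"
    proof -
      have m: "w * (if w < 0 then 1 else 0) = min w 0" for w :: real by auto
      show ?thesis by (simp add: inner_vec3 ev_def mlow_def m)
    qed
    ultimately show "mlow ?u \<in> (\<lambda>x. ?u \<bullet> x) ` cbox 0 1" by (intro image_eqI[of _ _ "ev ?u"]) simp_all
  next
    fix z assume "z \<in> (\<lambda>x. ?u \<bullet> x) ` cbox 0 1"
    then obtain x where x: "x \<in> cbox 0 1" and z: "z = ?u \<bullet> x" by auto
    have "\<And>i. 0 \<le> x$i \<and> x$i \<le> 1" using x by (auto simp: mem_box_cart)
    then have "min (?u$1) 0 \<le> ?u$1 * x$1" "min (?u$2) 0 \<le> ?u$2 * x$2" "min (?u$3) 0 \<le> ?u$3 * x$3"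
      by (auto intro!: min_le_mult)
    then show "mlow ?u \<le> z" unfolding z mlow_def inner_vec3 by linarith
  qed
  finally show ?thesis .
qed

lemma sg_mult: "(sg u *v y) $ i = (if u$i < 0 then - y$i else y$i)"
  using exhaust_3[of i] by (auto simp: sg_def matrix_vector_mult_def sum_3)

lemma det_sg: "\<bar>det (sg u)\<bar> = 1"
proof -
  have "det (sg u) = (\<Prod>i\<in>UNIV. sg u $ i $ i)"
    by (rule det_diagonal) (simp add: sg_def)
  also have "\<bar>\<dots>\<bar> = (\<Prod>i\<in>UNIV. \<bar>sg u $ i $ i\<bar>)" by (rule abs_prod)
  also have "\<dots> = (\<Prod>i\<in>(UNIV::3 set). 1)" by (intro prod.cong) (auto simp: sg_def)
  finally show ?thesis by simp
qed

lemma refl_image: "(\<lambda>y. sg u *v y + ev u) ` cbox 0 1 = cbox (0::real^3) 1"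
proof -
  let ?r = "\<lambda>y. sg u *v y + ev u"
  have r: "?r y $ i = (if u$i < 0 then 1 - y$i else y$i)" for y i
    by (simp add: sg_mult ev_def)
  have inv: "?r (?r y) = y" for y by (simp add: vec_eq_iff sg_mult ev_def)
  have sub: "?r ` cbox 0 1 \<subseteq> cbox 0 1"
  proof
    fix z assume "z \<in> ?r ` cbox 0 1"
    then obtain x where x: "x \<in> cbox (0::real^3) 1" and z: "z = ?r x" by auto
    have "\<forall>i. 0 \<le> ?r x $ i \<and> ?r x $ i \<le> 1" unfolding r using x by (auto simp: mem_box_cart)
    then show "z \<in> cbox 0 1" unfolding z by (simp add: mem_box_cart)
  qed
  show ?thesis
  proof
    show "?r ` cbox 0 1 \<subseteq> cbox 0 1" by (rule sub)
    show "cbox 0 1 \<subseteq> ?r ` cbox 0 1"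
    proof
      fix y :: "real^3" assume "y \<in> cbox 0 1"
      then have "?r y \<in> cbox 0 1" using sub by blast
      then show "y \<in> ?r ` cbox 0 1" by (intro image_eqI[of _ _ "?r y"]) (simp_all only: inv)
    qed
  qed
qed

definition av :: "real^3 \<Rightarrow> real^3" where
  "av u = (\<chi> i. \<bar>u$i\<bar>)"

lemma compi: "(u$i) * ((sg u *v y + ev u)$i) - min (u$i) 0 = \<bar>u$i\<bar> * (y$i :: real)"
  by (cases "u$i < 0") (simp_all add: sg_mult ev_def algebra_simps)

lemma zc_phi: "zc (Q *v (sg (Q$3) *v y + ev (Q$3)) - mlow (Q$3) *\<^sub>R axis 3 1) = av (Q$3) \<bullet> y"
proof -
  let ?u = "Q$3"
  have "zc (Q *v (sg ?u *v y + ev ?u) - mlow ?u *\<^sub>R axis 3 1) = ?u \<bullet> (sg ?u *v y + ev ?u) - mlow ?u"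
    by (simp add: zc_def zc_mult[unfolded zc_def] axis_def)
  also have "\<dots> = av ?u \<bullet> y"
  proof -
    have "av ?u \<bullet> y = \<bar>?u$1\<bar> * y$1 + \<bar>?u$2\<bar> * y$2 + \<bar>?u$3\<bar> * y$3" by (simp add: inner_vec3 av_def)
    then show ?thesis unfolding inner_vec3[of ?u] mlow_def
      using compi[of ?u 1 y] compi[of ?u 2 y] compi[of ?u 3 y] by linarith
  qed
  finally show ?thesis .
qed

lemma placed_eq:
  "placed Q = (\<lambda>y. (Q ** sg (Q$3)) *v y + (Q *v ev (Q$3) - mlow (Q$3) *\<^sub>R axis 3 1)) ` cbox 0 1"
proof -
  let ?u = "Q$3"
  have "placed Q = (\<lambda>x. Q *v x - mlow ?u *\<^sub>R axis 3 1) ` ((\<lambda>y. sg ?u *v y + ev ?u) ` cbox 0 1)"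
    unfolding placed_def unit_cube_def refl_image low_eq ..
  also have "\<dots> = ((\<lambda>x. Q *v x - mlow ?u *\<^sub>R axis 3 1) \<circ> (\<lambda>y. sg ?u *v y + ev ?u)) ` cbox 0 1"
    by (simp only: image_comp)
  also have "(\<lambda>x. Q *v x - mlow ?u *\<^sub>R axis 3 1) \<circ> (\<lambda>y. sg ?u *v y + ev ?u) = (\<lambda>y. (Q ** sg ?u) *v y + (Q *v ev ?u - mlow ?u *\<^sub>R axis 3 1))"
    by (rule ext) (simp add: matrix_vector_right_distrib matrix_vector_mul_assoc add_diff_eq)
  finally show ?thesis .
qed

lemma row_norm:
  fixes Q :: "real^3^3"
  assumes "orthogonal_matrix Q"
  shows "(Q$3$1)^2 + (Q$3$2)^2 + (Q$3$3)^2 = 1"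
proof -
  have "(Q ** transpose Q) $ 3 $ 3 = 1" using assms by (simp add: orthogonal_matrix_def mat_def)
  then show ?thesis by (simp add: matrix_matrix_mult_def transpose_def sum_3 power2_eq_square)
qed

lemma drain_eq:
  assumes "rotation_matrix Q"
  shows "drain_time K Q = (1 / K) * Fv (av (Q$3))"
proof -
  let ?u = "Q$3"
  let ?A = "Q ** sg ?u"
  let ?t = "Q *v ev ?u - mlow ?u *\<^sub>R axis 3 1"
  let ?h = "\<lambda>p::real^3. (zc p) powr (-1/2)"
  have orth: "orthogonal_matrix Q" and dQ: "det Q = 1" using assms by (auto simp: rotation_matrix_def)
  have dA: "\<bar>det ?A\<bar> = 1" using det_sg[of ?u] dQ by (simp add: det_mul abs_mult)
  have nn: "\<And>i. 0 \<le> av ?u $ i" by (simp add: av_def)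
  have n1: "(av ?u $ 1)^2 + (av ?u $ 2)^2 + (av ?u $ 3)^2 = 1" using row_norm[OF orth] by (simp add: av_def)
  have pos: "0 < av ?u $ 1 + av ?u $ 2 + av ?u $ 3"
  proof (rule ccontr)
    assume "\<not> ?thesis"
    then have "av ?u $ 1 = 0" "av ?u $ 2 = 0" "av ?u $ 3 = 0" using nn[of 1] nn[of 2] nn[of 3] by linarith+
    then show False using n1 by simp
  qed
  have eqf: "?h (?A *v x + ?t) = (av ?u \<bullet> x) powr (-1/2)" for x
  proof -
    have e: "?A *v x + ?t = Q *v (sg ?u *v x + ev ?u) - mlow ?u *\<^sub>R axis 3 1"
      by (simp add: matrix_vector_mul_assoc[symmetric] matrix_vector_right_distrib algebra_simps)
    show ?thesis unfolding e zc_phi ..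
  qed
  have H: "((\<lambda>x. (av ?u \<bullet> x) powr (-1/2)) has_integral Fv (av ?u)) (cbox 0 1)" by (rule Fv_has[OF nn pos])
  have AI: "(\<lambda>x. (av ?u \<bullet> x) powr (-1/2)) absolutely_integrable_on cbox 0 1"
    by (rule nonnegative_absolutely_integrable_1[OF intv[OF nn pos]]) simp
  have "(\<lambda>x. ?h (?A *v x + ?t)) absolutely_integrable_on cbox 0 1 \<and> ((\<lambda>x. ?h (?A *v x + ?t)) has_integral Fv (av ?u)) (cbox 0 1)"
    unfolding eqf using H AI by simp
  then have "(?h has_integral Fv (av ?u)) ((\<lambda>x. ?A *v x + ?t) ` cbox 0 1)"
    using cov_affine[OF dA, of "cbox 0 1" ?h ?t "Fv (av ?u)"] by simp
  then have "integral (placed Q) ?h = Fv (av ?u)"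
    unfolding placed_eq by (rule integral_unique)
  then show ?thesis unfolding drain_time_def by simp
qed



lemma num3: "(1::3) \<noteq> 2" "(1::3) \<noteq> 3" "(2::3) \<noteq> 3" "(2::3) \<noteq> 1" "(3::3) \<noteq> 1" "(3::3) \<noteq> 2"
  by simp_all

definition R0m :: "real \<Rightarrow> real \<Rightarrow> real \<Rightarrow> real^3^3" where
  "R0m a b c = vector [vector [a, -a, 0], vector [b, b, -2*b], vector [c, c, c]]"

lemma R0m_rot:
  assumes a: "a * a = 1/2" and b: "b * b = 1/6" and c: "c * c = 1/3" and abc: "a * b * c = 1/6"
  shows "rotation_matrix (R0m a b c)"
proof -
  have "transpose (R0m a b c) ** R0m a b c = mat 1"
    unfolding R0m_def
    by (simp add: vec_eq_iff forall_3 matrix_matrix_mult_def transpose_def mat_def sum_3 num3; use a b c in algebra)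
  moreover have "det (R0m a b c) = 1"
    unfolding R0m_def det_3 by (simp; use abc in algebra)
  ultimately show ?thesis by (simp add: rotation_matrix_def orthogonal_matrix)
qed

lemma R0_rot: "rotation_matrix (R0m (1 / sqrt 2) (1 / sqrt 6) (1 / sqrt 3))"
proof (rule R0m_rot)
  have "sqrt 2 * sqrt 6 * sqrt 3 = sqrt 36" by (simp flip: real_sqrt_mult)
  also have "sqrt 36 = 6" by (simp add: real_sqrt_eq_iff)
  finally have "sqrt 2 * sqrt 6 * sqrt 3 = 6" .
  then show "1 / sqrt 2 * (1 / sqrt 6) * (1 / sqrt 3) = 1 / 6" by simp
qed simp_all

lemma R0_diag: "diagonal_vertical (R0m (1 / sqrt 2) (1 / sqrt 6) (1 / sqrt 3))"
  unfolding diagonal_vertical_def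
proof (intro exI conjI)
  show "\<forall>i. (vector [1, 1, 1] :: real^3) $ i = 1 \<or> (vector [1, 1, 1] :: real^3) $ i = -1"
    by (simp add: forall_3)
  show "R0m (1 / sqrt 2) (1 / sqrt 6) (1 / sqrt 3) *v vector [1, 1, 1] = (3 / sqrt 3) *\<^sub>R axis 3 1"
    by (simp add: R0m_def vec_eq_iff forall_3 matrix_vector_mult_def sum_3 axis_def num3)
qed

lemma diag_av:
  fixes Q :: "real^3^3"
  assumes rot: "rotation_matrix Q" and dv: "diagonal_vertical Q"
  shows "av (Q$3) $ i = 1 / sqrt 3"
proof -
  have orth: "orthogonal_matrix Q" using rot by (simp add: rotation_matrix_def)
  obtain d :: "real^3" and c where d: "\<forall>i. d $ i = 1 \<or> d $ i = -1" and Qd: "Q *v d = c *\<^sub>R axis 3 1"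
    using dv unfolding diagonal_vertical_def by blast
  have "transpose Q *v (Q *v d) = d"
    using orth by (simp add: matrix_vector_mul_assoc orthogonal_matrix_def)
  then have dd: "d = transpose Q *v (c *\<^sub>R axis 3 1)" using Qd by simp
  have dc: "d $ j = c * Q$3$j" for j
    unfolding dd using exhaust_3[of j]
    by (auto simp: matrix_vector_mult_def transpose_def axis_def sum_3 num3)
  have sq: "(d $ j)^2 = 1" for j using d by (metis power2_minus power_one)
  have "c^2 * ((Q$3$1)^2 + (Q$3$2)^2 + (Q$3$3)^2) = (d$1)^2 + (d$2)^2 + (d$3)^2"
    by (simp add: dc power_mult_distrib algebra_simps)
  then have c2: "c^2 = 3" using row_norm[OF orth] sq by simp
  have "c^2 * (Q$3$i)^2 = 1" using sq[of i] dc[of i] by (simp add: power_mult_distrib)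
  then have "(Q$3$i)^2 = 1/3" using c2 by (simp add: field_simps)
  then have "\<bar>Q$3$i\<bar> = sqrt (1/3)" by (metis real_sqrt_abs)
  then show ?thesis by (simp add: av_def real_sqrt_divide)
qed

lemma value_eq:
  "8 * root 4 3 / (5 * K) * (1 + 3 * sqrt 3 - 4 * sqrt 2) = (1 / K) * (3 powr (1/4) * Jv)"
proof -
  have "root 4 3 = 3 powr (1/4)" using root_powr_inverse[of 4 3] by simp
  then show ?thesis by (simp add: Jv_def field_simps)
qed

theorem theorem2:
  fixes K :: real
  assumes "K > 0"
  shows "(\<forall>Q. rotation_matrix Q \<longrightarrow>
            8 * root 4 3 / (5 * K) * (1 + 3 * sqrt 3 - 4 * sqrt 2) \<le> drain_time K Q)
       \<and> (\<forall>Q. rotation_matrix Q \<and> diagonal_vertical Q \<longrightarrow>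
            drain_time K Q = 8 * root 4 3 / (5 * K) * (1 + 3 * sqrt 3 - 4 * sqrt 2))
       \<and> T_min K = 8 * root 4 3 / (5 * K) * (1 + 3 * sqrt 3 - 4 * sqrt 2)"
proof -
  have lower: "8 * root 4 3 / (5 * K) * (1 + 3 * sqrt 3 - 4 * sqrt 2) \<le> drain_time K Q"
    if rot: "rotation_matrix Q" for Q
  proof -
    have orth: "orthogonal_matrix Q" using rot by (simp add: rotation_matrix_def)
    have nn: "\<And>i. 0 \<le> av (Q$3) $ i" by (simp add: av_def)
    have n1: "(av (Q$3) $ 1)^2 + (av (Q$3) $ 2)^2 + (av (Q$3) $ 3)^2 = 1"
      using row_norm[OF orth] by (simp add: av_def)
    have "3 powr (1/4) * Jv \<le> Fv (av (Q$3))" by (rule Fv_bound[OF nn n1])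
    then have "(1 / K) * (3 powr (1/4) * Jv) \<le> (1 / K) * Fv (av (Q$3))"
      using assms by (intro mult_left_mono) auto
    then show ?thesis unfolding value_eq drain_eq[OF rot] .
  qed
  have diag: "drain_time K Q = 8 * root 4 3 / (5 * K) * (1 + 3 * sqrt 3 - 4 * sqrt 2)"
    if rot: "rotation_matrix Q" and dv: "diagonal_vertical Q" for Q
  proof -
    have "Fv (av (Q$3)) = 3 powr (1/4) * Jv"
      by (rule Fv_diag) (rule diag_av[OF rot dv])
    then show ?thesis unfolding value_eq drain_eq[OF rot] by simp
  qed
  have tmin: "T_min K = 8 * root 4 3 / (5 * K) * (1 + 3 * sqrt 3 - 4 * sqrt 2)"
    unfolding T_min_def
  proof (rule cInf_eq_minimum)
    let ?R = "R0m (1 / sqrt 2) (1 / sqrt 6) (1 / sqrt 3)"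
    have "drain_time K ?R = 8 * root 4 3 / (5 * K) * (1 + 3 * sqrt 3 - 4 * sqrt 2)"
      by (rule diag[OF R0_rot R0_diag])
    then show "8 * root 4 3 / (5 * K) * (1 + 3 * sqrt 3 - 4 * sqrt 2) \<in> drain_time K ` {Q. rotation_matrix Q}"
      using R0_rot by (metis (mono_tags, lifting) image_eqI mem_Collect_eq)
  next
    fix x assume "x \<in> drain_time K ` {Q. rotation_matrix Q}"
    then show "8 * root 4 3 / (5 * K) * (1 + 3 * sqrt 3 - 4 * sqrt 2) \<le> x" using lower by auto
  qed
  show ?thesis using lower diag tmin by blast
qed


end
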